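(* There is an absolute constant $C$ such that the following holds for all positive integers $n$. Let $w=\lfloor0.4n\rfloor$, and let integers $i\ne j$ and $k=i+j$ satisfy $|i|,|j|\le2w$ and $|k|\le w$. Then $R_i\cup R_j\cup L_k$ Schur embeds into $\{1,3,4\}\times\{0,1,\dots,\lfloor0.15n\rfloor+C\}$.
   Context: $R=\{(x,y)\in\mathbb{R}^2:0.7n\le x+y\le n,\ |x-y|\le0.8n\}$, $L=\{(x,y)\in\mathbb{R}^2:2\lceil0.7n\rceil\le x+y\le1.7n,\ |x-y|\le0.4n\}$. Fibers: $R_j=\{(x,y)\in\mathbb{Z}^2\cap R:x-y=j\}$ for $|j|\le 2w$ and $L_k=\{(x,y)\in\mathbb{Z}^2\cap L:x-y=k\}$ for $|k|\le w$. A set $X_1\subset\mathbb{Z}^2$ Schur embeds into $X_2\subset\mathbb{Z}^2$ if there is an injection $f:X_1\to X_2$ such that for all $a,b,c\in X_1$, $a+b=c$ if and only if $f(a)+f(b)=f(c)$ (coordinatewise addition). *)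

theory Defs
  imports Complex_Main
begin

definition padd :: "int \<times> int \<Rightarrow> int \<times> int \<Rightarrow> int \<times> int" where
  "padd a b = (fst a + fst b, snd a + snd b)"

definition schur_embeds :: "(int \<times> int) set \<Rightarrow> (int \<times> int) set \<Rightarrow> bool" where
  "schur_embeds X1 X2 \<longleftrightarrow> (\<exists>f. inj_on f X1 \<and> f ` X1 \<subseteq> X2 \<and>
     (\<forall>a\<in>X1. \<forall>b\<in>X1. \<forall>c\<in>X1. padd a b = c \<longleftrightarrow> padd (f a) (f b) = f c))"

definition Rreg :: "nat \<Rightarrow> (real \<times> real) set" where
  "Rreg n = {(x,y). 0.7 * real n \<le> x + y \<and> x + y \<le> real n \<and> \<bar>x - y\<bar> \<le> 0.8 * real n}"

definition Lreg :: "nat \<Rightarrow> (real \<times> real) set" where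
  "Lreg n = {(x,y). 2 * of_int \<lceil>0.7 * real n\<rceil> \<le> x + y \<and> x + y \<le> 1.7 * real n
                    \<and> \<bar>x - y\<bar> \<le> 0.4 * real n}"

definition Rfib :: "nat \<Rightarrow> int \<Rightarrow> (int \<times> int) set" where
  "Rfib n j = {(x,y). (real_of_int x, real_of_int y) \<in> Rreg n \<and> x - y = j}"

definition Lfib :: "nat \<Rightarrow> int \<Rightarrow> (int \<times> int) set" where
  "Lfib n k = {(x,y). (real_of_int x, real_of_int y) \<in> Lreg n \<and> x - y = k}"

end

theory Submission
  imports Defs
begin

lemma Rfib_iff: "(x,y) \<in> Rfib n j \<longleftrightarrow> 0.7 * real n \<le> real_of_int (x+y) \<and> real_of_int (x+y) \<le> real n
   \<and> \<bar>real_of_int x - real_of_int y\<bar> \<le> 0.8 * real n \<and> x - y = j"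
  by (auto simp: Rfib_def Rreg_def)

lemma Lfib_iff: "(x,y) \<in> Lfib n k \<longleftrightarrow> 2 * of_int \<lceil>0.7 * real n\<rceil> \<le> real_of_int (x+y) \<and> real_of_int (x+y) \<le> 1.7 * real n
   \<and> \<bar>real_of_int x - real_of_int y\<bar> \<le> 0.4 * real n \<and> x - y = k"
  by (auto simp: Lfib_def Lreg_def)

lemma Lfib_D: "(x,y) \<in> Lfib n k \<Longrightarrow> 1.4 * real n \<le> real_of_int x + real_of_int y \<and> real_of_int x + real_of_int y \<le> 1.7 * real n \<and> x - y = k"
proof -
  assume "(x,y) \<in> Lfib n k"
  moreover have "0.7 * real n \<le> real_of_int \<lceil>0.7 * real n\<rceil>" by linarith
  ultimately show ?thesis unfolding Lfib_iff by linarith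
qed

lemma Rfib_D: "(x,y) \<in> Rfib n k \<Longrightarrow> 0.7 * real n \<le> real_of_int x + real_of_int y \<and> real_of_int x + real_of_int y \<le> real n \<and> x - y = k"
  unfolding Rfib_iff by simp

theorem mainTheorem8:
  shows "\<exists>C::nat. \<forall>n::nat. n > 0 \<longrightarrow>
     (\<forall>i j k :: int. i \<noteq> j \<longrightarrow> k = i + j \<longrightarrow>
        \<bar>i\<bar> \<le> 2 * \<lfloor>0.4 * real n\<rfloor> \<longrightarrow> \<bar>j\<bar> \<le> 2 * \<lfloor>0.4 * real n\<rfloor> \<longrightarrow>
        \<bar>k\<bar> \<le> \<lfloor>0.4 * real n\<rfloor> \<longrightarrow>
        schur_embeds (Rfib n i \<union> Rfib n j \<union> Lfib n k)
                     ({1, 3, 4} \<times> {0 .. \<lfloor>0.15 * real n\<rfloor> + int C}))"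
proof (intro exI[of _ 2] allI impI)
  fix n :: nat and i j k :: int
  assume n: "n > 0" and ij: "i \<noteq> j" and k: "k = i + j"
  define o1 where "o1 = \<lfloor>(0.7 * real n - real_of_int i) / 2\<rfloor>"
  define o2 where "o2 = \<lfloor>(0.7 * real n - real_of_int j) / 2\<rfloor>"
  define W where "W = \<lfloor>0.15 * real n\<rfloor>"
  have o1: "real_of_int o1 \<le> (0.7 * real n - real_of_int i) / 2"
           "(0.7 * real n - real_of_int i) / 2 < real_of_int o1 + 1"
    unfolding o1_def by linarith+
  have o2: "real_of_int o2 \<le> (0.7 * real n - real_of_int j) / 2"
           "(0.7 * real n - real_of_int j) / 2 < real_of_int o2 + 1"
    unfolding o2_def by linarith+
  have W: "0.15 * real n < real_of_int W + 1" unfolding W_def by linarith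
  have ce: "0.7 * real n \<le> real_of_int \<lceil>0.7 * real n\<rceil>" by linarith
  have np: "real n > 0" using n by simp
  define f where "f = (\<lambda>p::int\<times>int. if p \<in> Rfib n i then (1::int, snd p - o1)
      else if p \<in> Rfib n j then (3, snd p - o2) else (4, snd p - o1 - o2))"
  let ?X = "Rfib n i \<union> Rfib n j \<union> Lfib n k"
  have disj: "Rfib n i \<inter> Rfib n j = {}" "Rfib n i \<inter> Lfib n k = {}" "Rfib n j \<inter> Lfib n k = {}"
    using ij np by (auto dest!: Rfib_D Lfib_D)
  have fi: "f (x,y) = (1, y - o1)" if "(x,y) \<in> Rfib n i" for x y
    using that by (simp add: f_def)
  have fj: "f (x,y) = (3, y - o2)" if "(x,y) \<in> Rfib n j" for x y
    using that disj by (auto simp: f_def)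
  have fk: "f (x,y) = (4, y - o1 - o2)" if "(x,y) \<in> Lfib n k" for x y
    using that disj by (auto simp: f_def)
  show "schur_embeds ?X ({1, 3, 4} \<times> {0 .. \<lfloor>0.15 * real n\<rfloor> + int 2})"
  proof -
    have cls: "((x,y) \<in> Rfib n i \<and> f (x,y) = (1, y - o1) \<and> 0.7 * real n \<le> real_of_int x + real_of_int y
        \<and> real_of_int x + real_of_int y \<le> real n \<and> real_of_int x - real_of_int y = real_of_int i \<and> x - y = i) \<or>
      ((x,y) \<in> Rfib n j \<and> f (x,y) = (3, y - o2) \<and> 0.7 * real n \<le> real_of_int x + real_of_int y
        \<and> real_of_int x + real_of_int y \<le> real n \<and> real_of_int x - real_of_int y = real_of_int j \<and> x - y = j) \<or>
      ((x,y) \<in> Lfib n k \<and> f (x,y) = (4, y - o1 - o2) \<and> 1.4 * real n \<le> real_of_int x + real_of_int y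
        \<and> real_of_int x + real_of_int y \<le> 1.7 * real n \<and> real_of_int x - real_of_int y = real_of_int i + real_of_int j \<and> x - y = i + j)"
      if "(x,y) \<in> ?X" for x y
    proof -
      from that consider "(x,y) \<in> Rfib n i" | "(x,y) \<in> Rfib n j" | "(x,y) \<in> Lfib n k" by blast
      then show ?thesis
      proof cases
        case 1
        have "x - y = i" using Rfib_D[OF 1] by simp
        then have "real_of_int (x - y) = real_of_int i" by simp
        then show ?thesis using fi[OF 1] Rfib_D[OF 1] 1 by simp
      next
        case 2
        have "x - y = j" using Rfib_D[OF 2] by simp
        then have "real_of_int (x - y) = real_of_int j" by simp
        then show ?thesis using fj[OF 2] Rfib_D[OF 2] 2 disj by auto
      next
        case 3
        have "x - y = i + j" using Lfib_D[OF 3] k by simp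
        then have "real_of_int (x - y) = real_of_int (i + j)" by simp
        then show ?thesis using fk[OF 3] Lfib_D[OF 3] 3 disj k by auto
      qed
    qed
    have h1: "inj_on f ?X"
    proof (rule inj_onI)
      fix a b assume a: "a \<in> ?X" and b: "b \<in> ?X" and e: "f a = f b"
      obtain a1 a2 b1 b2 where ab: "a = (a1,a2)" "b = (b1,b2)" by (cases a, cases b) auto
      show "a = b" using cls[OF a[unfolded ab]] cls[OF b[unfolded ab]] e unfolding ab
        apply -
        apply (elim disjE conjE; simp only:)
        apply simp_all
        done
    qed
    have h2: "f ` ?X \<subseteq> {1, 3, 4} \<times> {0 .. \<lfloor>0.15 * real n\<rfloor> + int 2}"
    proof
      fix q assume "q \<in> f ` ?X"
      then obtain x y where xy: "(x,y) \<in> ?X" and q: "q = f (x,y)" by auto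
      from xy consider "(x,y) \<in> Rfib n i" | "(x,y) \<in> Rfib n j" | "(x,y) \<in> Lfib n k" by blast
      then show "q \<in> {1, 3, 4} \<times> {0 .. \<lfloor>0.15 * real n\<rfloor> + int 2}"
      proof cases
        case 1
        then have "0.7 * real n \<le> real_of_int (x+y)" "real_of_int (x+y) \<le> real n" "x - y = i"
          by (auto simp: Rfib_iff)
        then have "real_of_int (y - o1) \<ge> 0" "real_of_int (y - o1) < real_of_int (W + 2)" using o1 W by auto
        then show ?thesis using fi[OF 1] q unfolding W_def by simp
      next
        case 2
        then have "0.7 * real n \<le> real_of_int (x+y)" "real_of_int (x+y) \<le> real n" "x - y = j"
          by (auto simp: Rfib_iff)
        then have "real_of_int (y - o2) \<ge> 0" "real_of_int (y - o2) < real_of_int (W + 2)" using o2 W by auto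
        then show ?thesis using fj[OF 2] q unfolding W_def by simp
      next
        case 3
        then have "1.4 * real n \<le> real_of_int (x+y)" "real_of_int (x+y) \<le> 1.7 * real n" "x - y = k"
          by (auto dest!: Lfib_D)
        moreover from this(3) have "x = y + i + j" using k by simp
        then have "real_of_int x = real_of_int y + real_of_int i + real_of_int j" by simp
        ultimately have "real_of_int (y - o1 - o2) \<ge> 0" "real_of_int (y - o1 - o2) < real_of_int (W + 3)"
          using o1 o2 W by auto
        then show ?thesis using fk[OF 3] q unfolding W_def by simp
      qed
    qed
    have ijr: "real_of_int i \<noteq> real_of_int j" using ij by simp
    have h3: "\<forall>a\<in>?X. \<forall>b\<in>?X. \<forall>c\<in>?X. padd a b = c \<longleftrightarrow> padd (f a) (f b) = f c"
    proof (intro ballI)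
      fix a b c assume a: "a \<in> ?X" and b: "b \<in> ?X" and c: "c \<in> ?X"
      obtain a1 a2 b1 b2 c1 c2 where abc: "a = (a1,a2)" "b = (b1,b2)" "c = (c1,c2)"
        by (cases a, cases b, cases c) auto
      note A = cls[OF a[unfolded abc]] and B = cls[OF b[unfolded abc]] and C = cls[OF c[unfolded abc]]
      show "padd a b = c \<longleftrightarrow> padd (f a) (f b) = f c"
      proof
        assume "padd a b = c"
        then have e: "a1 + b1 = c1" "a2 + b2 = c2" unfolding abc padd_def by auto
        then have er: "real_of_int a1 + real_of_int b1 = real_of_int c1" "real_of_int a2 + real_of_int b2 = real_of_int c2"
          by (metis of_int_add)+
        show "padd (f a) (f b) = f c"
          using A B C np ijr er unfolding abc padd_def
          apply -
          apply (elim disjE conjE; simp only:)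
          using e apply (simp_all add: algebra_simps)
          done
      next
        assume "padd (f a) (f b) = f c"
        then show "padd a b = c"
          using A B C unfolding abc padd_def
          apply -
          apply (elim disjE conjE; simp only:)
          apply (simp_all add: algebra_simps)
          done
      qed
    qed
    show ?thesis unfolding schur_embeds_def by (rule exI[of _ f], intro conjI h1 h2 h3)
  qed
qed

end
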